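(* Let $q$ be a nonzero complex number with $q^4\ne 1$, and let $\zeta,\kappa,\zeta',\kappa'$ be nonzero complex numbers with $\zeta,\zeta'\neq\pm1$ and $\kappa^4\neq1$, $(\kappa')^4\ne1$. Then the space of $U_q(\mathfrak{gl}(1|1))$-module homomorphisms $V(\zeta,\kappa)\otimes V(\zeta',\kappa')\to V(\zeta',\kappa')\otimes V(\zeta,\kappa)$ is two-dimensional, spanned by the maps $R=R_{\zeta,\zeta'}$ and $R'=R'_{\zeta,\zeta'}$ defined by \[\phi(x\otimes x')=a_2\,x'\otimes x,\ \phi(x\otimes y')=c_2\,x'\otimes y+b_2\,y'\otimes x,\ \phi(y\otimes x')=b_1\,x'\otimes y+c_1\,y'\otimes x,\ \phi(y\otimes y')=a_1\,y'\otimes y\] with \[\begin{array}{c|cccccc} & a_1 & a_2 & b_1 & b_2 & c_1 & c_2\\\hline R & -\zeta\zeta' & 1 & \zeta' & \zeta & 1-\zeta^2 & 0\\ R' & 1 & -\zeta\zeta' & -\zeta & -\zeta' & 0 & 1-(\zeta')^2\end{array}\]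
   Context: $[\zeta]=\frac{\zeta-\zeta^{-1}}{q-q^{-1}}$. $U_q(\mathfrak{gl}(1|1))$ is the associative superalgebra generated by odd $E,F$ and even invertible commuting $W^{\pm1},K^{\pm1}$ with relations $KEK^{-1}=q^2E$, $KFK^{-1}=q^{-2}F$, $W$ central, $EF+FE=\frac{W-W^{-1}}{q-q^{-1}}$, $E^2=F^2=0$, with comultiplication $\Delta(W)=W\otimes W$, $\Delta(K)=K\otimes K$, $\Delta(E)=E\otimes W^{-1}+1\otimes E$, $\Delta(F)=F\otimes1+W\otimes F$; tensor products of modules use the sign rule $(a\otimes b)(v\otimes w)=(-1)^{|b||v|}(av\otimes bw)$. $V(\zeta,\kappa)$ is the module with basis $x$ (even), $y$ (odd): $Ex=0$, $Fx=y$, $Wx=\zeta x$, $Kx=\kappa x$, $Fy=0$, $Ey=[\zeta]x$, $Wy=\zeta y$, $Ky=q^{-2}\kappa y$; $V(\zeta',\kappa')$ similarly with basis $x',y'$. *)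

theory Defs
  imports Complex_Main
begin

datatype gen = GE | GF | GK | GKi | GW | GWi

definition qnum :: "complex \<Rightarrow> complex \<Rightarrow> complex" where
  "qnum q z = (z - inverse z) / (q - inverse q)"

text \<open>Matrices indexed by a finite basis: M i j = coefficient of basis vector i
  in the image of basis vector j.  Basis of V(zeta,kappa): False = x (even), True = y (odd).\<close>
type_synonym 'a mat = "'a \<Rightarrow> 'a \<Rightarrow> complex"

definition mmul :: "'a::finite mat \<Rightarrow> 'a mat \<Rightarrow> 'a mat" where
  "mmul A B = (\<lambda>i j. \<Sum>k\<in>UNIV. A i k * B k j)"

definition idm :: "'a mat" where
  "idm = (\<lambda>i j. if i = j then 1 else 0)"

definition repV :: "complex \<Rightarrow> complex \<Rightarrow> complex \<Rightarrow> gen \<Rightarrow> bool mat" where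
  "repV q \<zeta> \<kappa> g = (case g of
      GE \<Rightarrow> (\<lambda>i j. if \<not> i \<and> j then qnum q \<zeta> else 0)
    | GF \<Rightarrow> (\<lambda>i j. if i \<and> \<not> j then 1 else 0)
    | GW \<Rightarrow> (\<lambda>i j. if i = j then \<zeta> else 0)
    | GWi \<Rightarrow> (\<lambda>i j. if i = j then inverse \<zeta> else 0)
    | GK \<Rightarrow> (\<lambda>i j. if i = j then (if i then inverse (q^2) * \<kappa> else \<kappa>) else 0)
    | GKi \<Rightarrow> (\<lambda>i j. if i = j then inverse (if i then inverse (q^2) * \<kappa> else \<kappa>) else 0))"

text \<open>Tensor product a \<otimes> b of operators with the sign rule
  (a \<otimes> b)(v \<otimes> w) = (-1)^{|b||v|} (a v \<otimes> b w); pb is the parity of b.\<close>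
definition tens :: "bool \<Rightarrow> bool mat \<Rightarrow> bool mat \<Rightarrow> (bool \<times> bool) mat" where
  "tens pb A B = (\<lambda>(k, l) (i, j). (if pb \<and> i then -1 else 1) * A k i * B l j)"

text \<open>Action on V(zeta,kappa) \<otimes> V(zeta',kappa') through the comultiplication.\<close>
definition repVV :: "complex \<Rightarrow> complex \<Rightarrow> complex \<Rightarrow> complex \<Rightarrow> complex \<Rightarrow> gen
    \<Rightarrow> (bool \<times> bool) mat" where
  "repVV q \<zeta> \<kappa> \<zeta>' \<kappa>' g = (case g of
      GE \<Rightarrow> (\<lambda>a b. tens False (repV q \<zeta> \<kappa> GE) (repV q \<zeta>' \<kappa>' GWi) a b
                  + tens True idm (repV q \<zeta>' \<kappa>' GE) a b)
    | GF \<Rightarrow> (\<lambda>a b. tens False (repV q \<zeta> \<kappa> GF) idm a b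
                  + tens True (repV q \<zeta> \<kappa> GW) (repV q \<zeta>' \<kappa>' GF) a b)
    | _ \<Rightarrow> tens False (repV q \<zeta> \<kappa> g) (repV q \<zeta>' \<kappa>' g))"

text \<open>Module homomorphisms V(zeta,kappa)\<otimes>V(zeta',kappa') \<rightarrow> V(zeta',kappa')\<otimes>V(zeta,kappa),
  as matrices (every linear map between these finite-dimensional spaces is one).\<close>
definition is_hom :: "complex \<Rightarrow> complex \<Rightarrow> complex \<Rightarrow> complex \<Rightarrow> complex
    \<Rightarrow> (bool \<times> bool) mat \<Rightarrow> bool" where
  "is_hom q \<zeta> \<kappa> \<zeta>' \<kappa>' M \<longleftrightarrow>
     (\<forall>g. mmul M (repVV q \<zeta> \<kappa> \<zeta>' \<kappa>' g) = mmul (repVV q \<zeta>' \<kappa>' \<zeta> \<kappa> g) M)"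

text \<open>The map phi with parameters a1 a2 b1 b2 c1 c2.  Source index (i,j): i in V, j in V';
  target index (k,l): k in V', l in V.\<close>
definition phi :: "complex \<Rightarrow> complex \<Rightarrow> complex \<Rightarrow> complex \<Rightarrow> complex \<Rightarrow> complex
    \<Rightarrow> (bool \<times> bool) mat" where
  "phi a1 a2 b1 b2 c1 c2 = (\<lambda>t s.
     if s = (False, False) then (if t = (False, False) then a2 else 0)
     else if s = (False, True) then
       (if t = (False, True) then c2 else if t = (True, False) then b2 else 0)
     else if s = (True, False) then
       (if t = (False, True) then b1 else if t = (True, False) then c1 else 0)
     else (if t = (True, True) then a1 else 0))"

definition Rmap :: "complex \<Rightarrow> complex \<Rightarrow> (bool \<times> bool) mat" where
  "Rmap \<zeta> \<zeta>' = phi (- \<zeta> * \<zeta>') 1 \<zeta>' \<zeta> (1 - \<zeta>^2) 0"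

definition R'map :: "complex \<Rightarrow> complex \<Rightarrow> (bool \<times> bool) mat" where
  "R'map \<zeta> \<zeta>' = phi 1 (- \<zeta> * \<zeta>') (- \<zeta>) (- \<zeta>') 0 (1 - \<zeta>'^2)"

end

theory Submission
  imports Defs
begin
lemma sumU: "(\<Sum>x\<in>(UNIV::(bool\<times>bool) set). f x) = f (False,False) + f (False,True) + f (True,False) + f (True,True)"
proof -
  have e: "(UNIV::(bool\<times>bool) set) = {(False,False),(False,True),(True,False),(True,True)}" by auto
  show ?thesis unfolding e by (simp add: add.assoc)
qed
lemmas U = mmul_def repVV_def tens_def repV_def idm_def sumU

definition Eeqs where "Eeqs n z z' a1 a2 b1 b2 c1 c2 \<longleftrightarrow>
  a2 * (n z * inverse z') = n z * b1 + n z' * inverse z * c1 \<and>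
  a2 * n z' = n z * c2 + n z' * inverse z * b2 \<and>
  b2 * (n z * inverse z') - c1 * n z' = - (n z * a1) \<and>
  c2 * (n z * inverse z') - b1 * n z' = n z' * inverse z * a1"

definition Feqs where "Feqs z z' a1 a2 b1 b2 c1 c2 \<longleftrightarrow>
  b2 * z + c1 = a2 \<and> c2 * z + b1 = z' * a2 \<and> a1 = c2 - z' * b2 \<and> - (a1 * z) = b1 - z' * c1"

lemma hom_phi:
  assumes "Eeqs (qnum q) z z' a1 a2 b1 b2 c1 c2" "Feqs z z' a1 a2 b1 b2 c1 c2"
  shows "is_hom q z k z' k' (phi a1 a2 b1 b2 c1 c2)"
  unfolding is_hom_def
  apply (intro allI ext)
  subgoal for g t s
  using assms unfolding Eeqs_def Feqs_def
  apply (cases g; cases t; cases s)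
  apply (simp_all add: U phi_def split: prod.splits)
  done done

lemma hom_shape:
  assumes h: "is_hom q z k z' k' M" and nz: "q \<noteq> 0" "k \<noteq> 0" "k' \<noteq> 0" "q^2 \<noteq> 1"
    "inverse (q^2) * inverse (q^2) \<noteq> 1"
  shows "M = phi (M (True,True) (True,True)) (M (False,False) (False,False)) (M (False,True) (True,False))
     (M (True,False) (False,True)) (M (True,False) (True,False)) (M (False,True) (False,True))"
   "Eeqs (qnum q) z z' (M (True,True) (True,True)) (M (False,False) (False,False)) (M (False,True) (True,False))
     (M (True,False) (False,True)) (M (True,False) (True,False)) (M (False,True) (False,True))"
   "Feqs z z' (M (True,True) (True,True)) (M (False,False) (False,False)) (M (False,True) (True,False))
     (M (True,False) (False,True)) (M (True,False) (True,False)) (M (False,True) (False,True))"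
proof -
  have H: "\<And>g t s. mmul M (repVV q z k z' k' g) t s = mmul (repVV q z' k' z k g) M t s"
    using h unfolding is_hom_def by metis
  have Z: "M (a,b) (c,d) = 0" if "a \<noteq> c \<or> b \<noteq> d" "(a \<or> b) \<noteq> (c \<or> d) \<or> (a \<and> b) \<noteq> (c \<and> d)" for a b c d
    using H[of GK "(a,b)" "(c,d)"] that nz
    by (cases a; cases b; cases c; cases d) (simp_all add: U)
  show "M = phi (M (True,True) (True,True)) (M (False,False) (False,False)) (M (False,True) (True,False))
     (M (True,False) (False,True)) (M (True,False) (True,False)) (M (False,True) (False,True))"
  proof (intro ext)
    fix t s :: "bool \<times> bool"
    obtain a b c d where ts: "t = (a,b)" "s = (c,d)" by (cases t, cases s) auto
    show "M t s = phi (M (True,True) (True,True)) (M (False,False) (False,False)) (M (False,True) (True,False))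
     (M (True,False) (False,True)) (M (True,False) (True,False)) (M (False,True) (False,True)) t s"
      unfolding ts
      by (cases a; cases b; cases c; cases d) (simp_all add: phi_def Z)
  qed
  show "Eeqs (qnum q) z z' (M (True,True) (True,True)) (M (False,False) (False,False)) (M (False,True) (True,False))
     (M (True,False) (False,True)) (M (True,False) (True,False)) (M (False,True) (False,True))"
    unfolding Eeqs_def
    using H[of GE "(False,False)" "(True,False)"] H[of GE "(False,False)" "(False,True)"]
      H[of GE "(True,False)" "(True,True)"] H[of GE "(False,True)" "(True,True)"]
      Z[of False False True True] Z[of False True False False] Z[of True False False False]
      Z[of False False False True] Z[of False False True False]
    by (simp add: U)
  show "Feqs z z' (M (True,True) (True,True)) (M (False,False) (False,False)) (M (False,True) (True,False))
     (M (True,False) (False,True)) (M (True,False) (True,False)) (M (False,True) (False,True))"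
    unfolding Feqs_def
    using H[of GF "(True,False)" "(False,False)"] H[of GF "(False,True)" "(False,False)"]
      H[of GF "(True,True)" "(False,True)"] H[of GF "(True,True)" "(True,False)"]
      Z[of False False True True] Z[of True True False False] Z[of True True False True]
      Z[of True True True False] Z[of False True True True] Z[of True False True True]
    by (simp add: U)
qed

lemma hb2_aux: fixes Q z z' c d :: complex assumes "Q \<noteq> 0" "z \<noteq> 0" "z' \<noteq> 0"
  shows "(c - d*z*z') * ((z' - inverse z')/Q) - ((z - inverse z)/Q) * (d*(1-z'^2)) = (c*z - d*z') * (((z' - inverse z')/Q) * inverse z)"
  using assms by (simp add: field_simps) (simp add: algebra_simps power2_eq_square)

lemma EQ: fixes Q z z' c d :: complex assumes "Q \<noteq> 0" "z \<noteq> 0" "z' \<noteq> 0"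
  shows "Eeqs (\<lambda>x. (x - inverse x)/Q) z z' (c*(- z*z') + d) (c - d*z*z') (c*z' - d*z) (c*z - d*z') (c*(1-z^2)) (d*(1-z'^2))"
  using assms unfolding Eeqs_def by (simp add: field_simps) (simp add: algebra_simps power2_eq_square)

lemma qnum_eq: "qnum q = (\<lambda>x. (x - inverse x)/(q - inverse q))"
  by (simp add: qnum_def fun_eq_iff)

lemma comb: "(\<lambda>t s. c * Rmap z z' t s + d * R'map z z' t s) =
  phi (c*(- z*z') + d) (c - d*z*z') (c*z' - d*z) (c*z - d*z') (c*(1-z^2)) (d*(1-z'^2))"
  by (intro ext) (auto simp: Rmap_def R'map_def phi_def algebra_simps)

lemma comb_eqs:
  assumes "q \<noteq> 0" "q^2 \<noteq> 1" "z \<noteq> 0" "z' \<noteq> 0"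
  shows "Eeqs (qnum q) z z' (c*(- z*z') + d) (c - d*z*z') (c*z' - d*z) (c*z - d*z') (c*(1-z^2)) (d*(1-z'^2))"
    "Feqs z z' (c*(- z*z') + d) (c - d*z*z') (c*z' - d*z) (c*z - d*z') (c*(1-z^2)) (d*(1-z'^2))"
proof -
  have qq: "q - inverse q \<noteq> 0"
  proof
    assume "q - inverse q = 0"
    then have "q * q = 1" using assms(1) by (simp add: field_simps)
    then show False using assms(2) by (simp add: power2_eq_square)
  qed
  show "Eeqs (qnum q) z z' (c*(- z*z') + d) (c - d*z*z') (c*z' - d*z) (c*z - d*z') (c*(1-z^2)) (d*(1-z'^2))"
    unfolding qnum_eq using EQ[OF qq assms(3,4)] .
  show "Feqs z z' (c*(- z*z') + d) (c - d*z*z') (c*z' - d*z) (c*z - d*z') (c*(1-z^2)) (d*(1-z'^2))"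
    unfolding Feqs_def by (simp add: algebra_simps power2_eq_square)
qed

lemma solve:
  assumes "q \<noteq> 0" "q^2 \<noteq> 1" "z \<noteq> 0" "z' \<noteq> 0" "z' \<noteq> 1" "z' \<noteq> -1"
    "Eeqs (qnum q) z z' a1 a2 b1 b2 c1 c2" "Feqs z z' a1 a2 b1 b2 c1 c2"
  shows "\<exists>c d. phi a1 a2 b1 b2 c1 c2 = (\<lambda>t s. c * Rmap z z' t s + d * R'map z z' t s)"
proof -
  have qq: "q - inverse q \<noteq> 0"
  proof
    assume "q - inverse q = 0"
    then have "q * q = 1" using assms(1) by (simp add: field_simps)
    then show False using assms(2) by (simp add: power2_eq_square)
  qed
  have z2: "1 - z'^2 \<noteq> 0"
  proof
    assume "1 - z'^2 = 0"
    then have "(z' - 1) * (z' + 1) = 0" by (simp add: algebra_simps power2_eq_square)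
    then have "z' - 1 = 0 \<or> z' + 1 = 0" by simp
    then show False using assms(5,6) by (auto simp: eq_neg_iff_add_eq_0)
  qed
  define d where "d = c2 / (1 - z'^2)"
  define c where "c = a2 + z*z'*d"
  have e2: "a2 * qnum q z' = qnum q z * c2 + qnum q z' * inverse z * b2"
    using assms(7) unfolding Eeqs_def by blast
  have qz': "qnum q z' \<noteq> 0"
  proof -
    have "z' - inverse z' \<noteq> 0"
    proof
      assume "z' - inverse z' = 0"
      then have "z' * z' = 1" using assms(4) by (simp add: field_simps)
      then show False using z2 by (simp add: power2_eq_square)
    qed
    then show ?thesis using qq unfolding qnum_def by simp
  qed
  have hc2: "c2 = d*(1-z'^2)" using z2 unfolding d_def by simp
  have ha2: "a2 = c - d*z*z'" unfolding c_def by simp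
  have hb2: "b2 = c*z - d*z'"
  proof -
    have "b2 * (qnum q z' * inverse z) = a2 * qnum q z' - qnum q z * c2" using e2 by simp
    also have "\<dots> = (c*z - d*z') * (qnum q z' * inverse z)"
      unfolding ha2 hc2 qnum_def using hb2_aux[OF qq assms(3,4)] by simp
    finally show ?thesis using qz' assms(3) by simp
  qed
  have F: "b2 * z + c1 = a2" "c2 * z + b1 = z' * a2" "a1 = c2 - z' * b2"
    using assms(8) unfolding Feqs_def by auto
  have "phi a1 a2 b1 b2 c1 c2 = phi (c*(- z*z') + d) (c - d*z*z') (c*z' - d*z) (c*z - d*z') (c*(1-z^2)) (d*(1-z'^2))"
  proof -
    have "c1 = c*(1-z^2)" using F(1) ha2 hb2 by (simp add: algebra_simps power2_eq_square)
    moreover have "b1 = c*z' - d*z" using F(2) ha2 hc2 by (simp add: algebra_simps power2_eq_square)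
    moreover have "a1 = c*(- z*z') + d" using F(3) hb2 hc2 by (simp add: algebra_simps power2_eq_square)
    ultimately show ?thesis using ha2 hb2 hc2 by simp
  qed
  then show ?thesis unfolding comb by blast
qed
theorem theorem4p3:
  fixes q \<zeta> \<kappa> \<zeta>' \<kappa>' :: complex
  assumes "q \<noteq> 0" "q ^ 4 \<noteq> 1"
    and "\<zeta> \<noteq> 0" "\<kappa> \<noteq> 0" "\<zeta>' \<noteq> 0" "\<kappa>' \<noteq> 0"
    and "\<zeta> \<noteq> 1" "\<zeta> \<noteq> -1" "\<zeta>' \<noteq> 1" "\<zeta>' \<noteq> -1"
    and "\<kappa> ^ 4 \<noteq> 1" "\<kappa>' ^ 4 \<noteq> 1"
  shows "{M. is_hom q \<zeta> \<kappa> \<zeta>' \<kappa>' M}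
           = {(\<lambda>t s. c * Rmap \<zeta> \<zeta>' t s + d * R'map \<zeta> \<zeta>' t s) | c d. True}
       \<and> (\<forall>c d. (\<lambda>t s. c * Rmap \<zeta> \<zeta>' t s + d * R'map \<zeta> \<zeta>' t s) = (\<lambda>t s. 0)
               \<longrightarrow> c = 0 \<and> d = 0)"
proof -
  have "q^2 * q^2 = q^4" by (simp flip: power_add)
  then have q4: "q^2 * q^2 \<noteq> 1" using assms(2) by simp
  have q2: "q^2 \<noteq> 1" using q4 by (metis mult_1)
  have q4': "inverse (q^2) * inverse (q^2) \<noteq> 1"
  proof
    assume "inverse (q^2) * inverse (q^2) = 1"
    then have "inverse (q^2 * q^2) = 1" by (metis inverse_mult_distrib)
    then show False using q4 by (metis inverse_1 inverse_inverse_eq)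
  qed
  have z2: "1 - \<zeta>'^2 \<noteq> 0"
  proof
    assume "1 - \<zeta>'^2 = 0"
    then have "(\<zeta>' - 1) * (\<zeta>' + 1) = 0" by (simp add: algebra_simps power2_eq_square)
    then have "\<zeta>' - 1 = 0 \<or> \<zeta>' + 1 = 0" by simp
    then show False using assms(9,10) by (auto simp: eq_neg_iff_add_eq_0)
  qed
  have A: "{M. is_hom q \<zeta> \<kappa> \<zeta>' \<kappa>' M}
           = {(\<lambda>t s. c * Rmap \<zeta> \<zeta>' t s + d * R'map \<zeta> \<zeta>' t s) | c d. True}"
  proof (intro equalityI subsetI)
    fix M assume "M \<in> {M. is_hom q \<zeta> \<kappa> \<zeta>' \<kappa>' M}"
    then have h: "is_hom q \<zeta> \<kappa> \<zeta>' \<kappa>' M" by simp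
    note hs = hom_shape[OF h assms(1,4,6) q2 q4']
    from solve[OF assms(1) q2 assms(3,5,9,10) hs(2,3)] hs(1)
    show "M \<in> {(\<lambda>t s. c * Rmap \<zeta> \<zeta>' t s + d * R'map \<zeta> \<zeta>' t s) | c d. True}" by auto
  next
    fix M assume "M \<in> {(\<lambda>t s. c * Rmap \<zeta> \<zeta>' t s + d * R'map \<zeta> \<zeta>' t s) | c d. True}"
    then obtain c d where M: "M = (\<lambda>t s. c * Rmap \<zeta> \<zeta>' t s + d * R'map \<zeta> \<zeta>' t s)" by auto
    note ce = comb_eqs[OF assms(1) q2 assms(3,5), of c d]
    show "M \<in> {M. is_hom q \<zeta> \<kappa> \<zeta>' \<kappa>' M}"
      unfolding M comb using hom_phi[OF ce] by simp
  qed
  have B: "c = 0 \<and> d = 0" if "(\<lambda>t s. c * Rmap \<zeta> \<zeta>' t s + d * R'map \<zeta> \<zeta>' t s) = (\<lambda>t s. 0)" for c d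
  proof -
    have e1: "c - d*\<zeta>*\<zeta>' = 0" using fun_cong[OF fun_cong[OF that, of "(False,False)"], of "(False,False)"]
      by (simp add: Rmap_def R'map_def phi_def algebra_simps)
    have e2: "d*(1-\<zeta>'^2) = 0" using fun_cong[OF fun_cong[OF that, of "(False,True)"], of "(False,True)"]
      by (simp add: Rmap_def R'map_def phi_def algebra_simps)
    have "d = 0" using e2 z2 by simp
    then show ?thesis using e1 by simp
  qed
  show ?thesis using A B by blast
qed

end
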